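(* Let $\Omega$ be a locally compact metrisable space and $\{\mu_n\}_{n\in\mathbb{N}}\cup\{\mu\}\subset\mathcal{M}(\Omega)$. Then $\mu_n^+\to\mu^+$ vaguely and $\mu_n^-\to\mu^-$ vaguely if and only if $\mu_n\to\mu$ vaguely and $\limsup_{n\to\infty}|\mu_n|(K)\le|\mu|(K)$ for every compact set $K\subset\Omega$.
   Context: $\Omega$ carries its Borel $\sigma$-algebra. $\mathcal{M}(\Omega)$ denotes the set of finite signed Radon measures on $\Omega$: finite signed Borel measures $\mu$ with Hahn–Jordan decomposition $\mu=\mu^+-\mu^-$ whose variation $|\mu|=\mu^++\mu^-$ satisfies $|\mu|(A)=\sup\{|\mu|(K):K\subset A,\ K\text{ compact}\}$ for all Borel $A$. Vague convergence $\nu_n\to\nu$ means $\int f\,d\nu_n\to\int f\,d\nu$ for all continuous $f:\Omega\to\mathbb{R}$ with compact support. *)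

theory Defs
  imports "HOL-Analysis.Analysis"
begin

text \<open>A finite signed Borel measure on the topological space 'a, given as a
real-valued (hence finite) countably additive set function on the Borel sets.\<close>
definition signed_borel_measure :: "('a::topological_space set \<Rightarrow> real) \<Rightarrow> bool" where
  "signed_borel_measure \<mu> \<longleftrightarrow> \<mu> {} = 0 \<and>
     (\<forall>A :: nat \<Rightarrow> 'a set. range A \<subseteq> sets borel \<longrightarrow> disjoint_family A \<longrightarrow>
        (\<lambda>i. \<mu> (A i)) sums \<mu> (\<Union>i. A i))"

definition pos_part :: "('a::topological_space set \<Rightarrow> real) \<Rightarrow> 'a set \<Rightarrow> real" where
  "pos_part \<mu> A = Sup {\<mu> B | B. B \<in> sets borel \<and> B \<subseteq> A}"

definition neg_part :: "('a::topological_space set \<Rightarrow> real) \<Rightarrow> 'a set \<Rightarrow> real" where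
  "neg_part \<mu> A = pos_part (\<lambda>B. - \<mu> B) A"

definition variation :: "('a::topological_space set \<Rightarrow> real) \<Rightarrow> 'a set \<Rightarrow> real" where
  "variation \<mu> A = pos_part \<mu> A + neg_part \<mu> A"

definition signed_radon_measure :: "('a::topological_space set \<Rightarrow> real) \<Rightarrow> bool" where
  "signed_radon_measure \<mu> \<longleftrightarrow> signed_borel_measure \<mu> \<and>
     (\<forall>A \<in> sets borel. variation \<mu> A = Sup {variation \<mu> K | K. compact K \<and> K \<subseteq> A})"

definition pos_measure :: "('a::topological_space set \<Rightarrow> real) \<Rightarrow> 'a measure" where
  "pos_measure \<mu> = measure_of UNIV (sets borel) (\<lambda>A. ennreal (pos_part \<mu> A))"

definition neg_measure :: "('a::topological_space set \<Rightarrow> real) \<Rightarrow> 'a measure" where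
  "neg_measure \<mu> = measure_of UNIV (sets borel) (\<lambda>A. ennreal (neg_part \<mu> A))"

definition signed_integral :: "('a::topological_space set \<Rightarrow> real) \<Rightarrow> ('a \<Rightarrow> real) \<Rightarrow> real" where
  "signed_integral \<mu> f = integral\<^sup>L (pos_measure \<mu>) f - integral\<^sup>L (neg_measure \<mu>) f"

definition vague_conv :: "(nat \<Rightarrow> 'a::topological_space set \<Rightarrow> real) \<Rightarrow> ('a set \<Rightarrow> real) \<Rightarrow> bool" where
  "vague_conv \<nu>s \<nu> \<longleftrightarrow>
     (\<forall>f :: 'a \<Rightarrow> real. continuous_on UNIV f \<longrightarrow> compact (closure {x. f x \<noteq> 0}) \<longrightarrow>
        (\<lambda>n. signed_integral (\<nu>s n) f) \<longlonglongrightarrow> signed_integral \<nu> f)"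

end

theory Submission
  imports Defs "HOL-Analysis.Analysis"
begin

lemma sbm_empty: "signed_borel_measure \<mu> \<Longrightarrow> \<mu> {} = 0"
  by (simp add: signed_borel_measure_def)

lemma sbm_sums:
  "signed_borel_measure \<mu> \<Longrightarrow> range A \<subseteq> sets borel \<Longrightarrow> disjoint_family A \<Longrightarrow>
   (\<lambda>i. \<mu> (A i)) sums \<mu> (\<Union>i. A i)"
  by (simp add: signed_borel_measure_def)

lemma sbm_add:
  assumes s: "signed_borel_measure \<mu>" and A: "A \<in> sets borel" and B: "B \<in> sets borel"
    and d: "A \<inter> B = {}"
  shows "\<mu> (A \<union> B) = \<mu> A + \<mu> B"
proof -
  define F where "F i = (if i = 0 then A else if i = (1::nat) then B else {})" for i
  have r: "range F \<subseteq> sets borel" using A B by (auto simp: F_def)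
  have df: "disjoint_family F" using d unfolding disjoint_family_on_def F_def by auto
  have U: "(\<Union>i. F i) = A \<union> B"
    unfolding F_def by (auto split: if_splits)
  have 1: "(\<lambda>i. \<mu> (F i)) sums \<mu> (A \<union> B)" using sbm_sums[OF s r df] U by simp
  have 2: "(\<lambda>i. \<mu> (F i)) sums (\<Sum>i\<in>{0,1}. \<mu> (F i))"
    by (rule sums_finite) (auto simp: F_def sbm_empty[OF s])
  show ?thesis using sums_unique2[OF 1 2] by (simp add: F_def)
qed

lemma sbm_neg: "signed_borel_measure \<mu> \<Longrightarrow> signed_borel_measure (\<lambda>B. - \<mu> B)"
  unfolding signed_borel_measure_def by (auto intro: sums_minus)

lemma sbm_diff:
  assumes s: "signed_borel_measure \<mu>" and A: "A \<in> sets borel" and B: "B \<in> sets borel"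
  shows "\<mu> (A - B) = \<mu> A - \<mu> (A \<inter> B)"
proof -
  have "\<mu> A = \<mu> ((A - B) \<union> (A \<inter> B))" by (metis Un_Diff_Int)
  also have "\<dots> = \<mu> (A - B) + \<mu> (A \<inter> B)" using A B by (intro sbm_add[OF s]) auto
  finally show ?thesis by simp
qed

lemma sbm_bdd_UNIV:
  assumes s: "signed_borel_measure \<mu>"
  shows "bdd_above {\<mu> C | C. C \<in> sets borel}"
proof (rule ccontr)
  define bad where "bad E \<longleftrightarrow> E \<in> sets borel \<and> \<not> bdd_above {\<mu> C | C. C \<in> sets borel \<and> C \<subseteq> E}" for E
  assume "\<not> ?thesis"
  hence b0: "bad UNIV" unfolding bad_def by simp
  have step: "\<exists>E'. bad E' \<and> E' \<subseteq> E \<and> 1 \<le> \<bar>\<mu> (E - E')\<bar>" if bE: "bad E" for E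
  proof -
    have Eb: "E \<in> sets borel" using bE bad_def by auto
    from bE have "\<not> bdd_above {\<mu> C | C. C \<in> sets borel \<and> C \<subseteq> E}" unfolding bad_def by auto
    then obtain C where C: "C \<in> sets borel" "C \<subseteq> E" "\<mu> C > \<bar>\<mu> E\<bar> + 1"
      unfolding bdd_above_def by (auto simp: not_le)
    have "bad C \<or> bad (E - C)"
    proof (rule ccontr)
      assume "\<not> (bad C \<or> bad (E - C))"
      hence nb: "bdd_above {\<mu> D | D. D \<in> sets borel \<and> D \<subseteq> C}"
        "bdd_above {\<mu> D | D. D \<in> sets borel \<and> D \<subseteq> E - C}"
        using C Eb unfolding bad_def by auto
      obtain b1 where b1: "\<And>D. D \<in> sets borel \<Longrightarrow> D \<subseteq> C \<Longrightarrow> \<mu> D \<le> b1"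
        using nb(1) unfolding bdd_above_def by blast
      obtain b2 where b2: "\<And>D. D \<in> sets borel \<Longrightarrow> D \<subseteq> E - C \<Longrightarrow> \<mu> D \<le> b2"
        using nb(2) unfolding bdd_above_def by blast
      have "bdd_above {\<mu> D | D. D \<in> sets borel \<and> D \<subseteq> E}"
      proof (rule bdd_aboveI)
        fix x assume "x \<in> {\<mu> D | D. D \<in> sets borel \<and> D \<subseteq> E}"
        then obtain D where D: "D \<in> sets borel" "D \<subseteq> E" "x = \<mu> D" by auto
        have "\<mu> D = \<mu> (D \<inter> C) + \<mu> (D - C)"
          using sbm_diff[OF s D(1) C(1)] by simp
        also have "\<dots> \<le> b1 + b2" using D C by (intro add_mono b1 b2) auto
        finally show "x \<le> b1 + b2" using D by simp
      qed
      thus False using bE unfolding bad_def by simp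
    qed
    thus ?thesis
    proof
      assume "bad C"
      moreover have "\<mu> (E - C) = \<mu> E - \<mu> C" using sbm_diff[OF s Eb C(1)] C(2)
        by (simp add: Int_absorb1)
      ultimately show ?thesis using C by (intro exI[of _ C]) auto
    next
      assume "bad (E - C)"
      moreover have "E - (E - C) = C" using C(2) by auto
      ultimately show ?thesis using C by (intro exI[of _ "E - C"]) auto
    qed
  qed
  define E where "E = rec_nat UNIV (\<lambda>_ X. SOME E'. bad E' \<and> E' \<subseteq> X \<and> 1 \<le> \<bar>\<mu> (X - E')\<bar>)"
  have E0: "E 0 = UNIV" by (simp add: E_def)
  have ES: "E (Suc n) = (SOME E'. bad E' \<and> E' \<subseteq> E n \<and> 1 \<le> \<bar>\<mu> (E n - E')\<bar>)" for n
    by (simp add: E_def)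
  have badE: "bad (E n)" for n
  proof (induction n)
    case 0 then show ?case using b0 E0 by simp
  next
    case (Suc n) then show ?case using someI_ex[OF step[OF Suc]] ES by simp
  qed
  have props: "E (Suc n) \<subseteq> E n \<and> 1 \<le> \<bar>\<mu> (E n - E (Suc n))\<bar>" for n
    using someI_ex[OF step[OF badE[of n]]] ES by simp
  have dec: "decseq E" using props by (intro decseq_SucI) auto
  define F where "F n = E n - E (Suc n)" for n
  have Fb: "range F \<subseteq> sets borel" using badE unfolding F_def bad_def by auto
  have Fd: "disjoint_family F"
  proof (unfold disjoint_family_on_def, intro ballI impI)
    fix m n :: nat assume "m \<noteq> n"
    then consider "m < n" | "n < m" by linarith
    thus "F m \<inter> F n = {}"
    proof cases
      case 1 hence "E n \<subseteq> E (Suc m)" using decseqD[OF dec, of "Suc m" n] by simp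
      thus ?thesis unfolding F_def by auto
    next
      case 2 hence "E m \<subseteq> E (Suc n)" using decseqD[OF dec, of "Suc n" m] by simp
      thus ?thesis unfolding F_def by auto
    qed
  qed
  have "summable (\<lambda>i. \<mu> (F i))" using sbm_sums[OF s Fb Fd] by (rule sums_summable)
  hence "(\<lambda>i. \<mu> (F i)) \<longlonglongrightarrow> 0" by (rule summable_LIMSEQ_zero)
  hence "(\<lambda>i. \<bar>\<mu> (F i)\<bar>) \<longlonglongrightarrow> 0" by (rule tendsto_rabs_zero)
  hence "eventually (\<lambda>i. \<bar>\<mu> (F i)\<bar> < 1) sequentially"
    by (rule order_tendstoD) simp
  then obtain i where "\<bar>\<mu> (F i)\<bar> < 1" by (meson eventually_sequentially order_refl)
  thus False using props[of i] F_def by simp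
qed


lemma sbm_bdd:
  assumes s: "signed_borel_measure \<mu>"
  shows "bdd_above {\<mu> B | B. B \<in> sets borel \<and> B \<subseteq> A}"
  using sbm_bdd_UNIV[OF s] by (rule bdd_above_mono) auto

lemma pp_upper:
  assumes s: "signed_borel_measure \<mu>" and "B \<in> sets borel" "B \<subseteq> A"
  shows "\<mu> B \<le> pos_part \<mu> A"
  unfolding pos_part_def using assms by (intro cSup_upper sbm_bdd[OF s]) auto

lemma pp_least:
  assumes "\<And>B. B \<in> sets borel \<Longrightarrow> B \<subseteq> A \<Longrightarrow> \<mu> B \<le> c"
  shows "pos_part \<mu> A \<le> c"
  unfolding pos_part_def using assms by (intro cSup_least) auto

lemma pp_nonneg:
  assumes s: "signed_borel_measure \<mu>" shows "0 \<le> pos_part \<mu> A"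
  using pp_upper[OF s, of "{}" A] sbm_empty[OF s] by simp

lemma pp_empty:
  assumes s: "signed_borel_measure \<mu>" shows "pos_part \<mu> {} = 0"
proof (rule antisym)
  show "pos_part \<mu> {} \<le> 0"
    by (rule pp_least) (simp add: sbm_empty[OF s])
qed (rule pp_nonneg[OF s])

lemma pp_approx:
  assumes s: "signed_borel_measure \<mu>" and e: "e > 0"
  shows "\<exists>B. B \<in> sets borel \<and> B \<subseteq> A \<and> pos_part \<mu> A - e < \<mu> B"
proof -
  have "pos_part \<mu> A - e < Sup {\<mu> B | B. B \<in> sets borel \<and> B \<subseteq> A}"
    using e by (simp add: pos_part_def)
  from less_cSupD[OF _ this] show ?thesis by auto
qed

lemma pp_mono:
  assumes s: "signed_borel_measure \<mu>" and "A \<subseteq> A'"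
  shows "pos_part \<mu> A \<le> pos_part \<mu> A'"
  apply (rule pp_least) apply (rule pp_upper[OF s]) using assms by auto

lemma pp_add:
  assumes s: "signed_borel_measure \<mu>" and A: "A \<in> sets borel" and B: "B \<in> sets borel"
    and d: "A \<inter> B = {}"
  shows "pos_part \<mu> (A \<union> B) = pos_part \<mu> A + pos_part \<mu> B"
proof (rule antisym)
  show "pos_part \<mu> (A \<union> B) \<le> pos_part \<mu> A + pos_part \<mu> B"
  proof (rule pp_least)
    fix C assume C: "C \<in> sets borel" "C \<subseteq> A \<union> B"
    have "\<mu> C = \<mu> (C \<inter> A) + \<mu> (C - A)" using sbm_diff[OF s C(1) A] by simp
    also have "\<dots> \<le> pos_part \<mu> A + pos_part \<mu> B"
      using C A B by (intro add_mono pp_upper[OF s]) auto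
    finally show "\<mu> C \<le> pos_part \<mu> A + pos_part \<mu> B" .
  qed
next
  have key: "\<mu> C + \<mu> D \<le> pos_part \<mu> (A \<union> B)"
    if "C \<in> sets borel" "C \<subseteq> A" "D \<in> sets borel" "D \<subseteq> B" for C D
  proof -
    have "C \<inter> D = {}" using that d by auto
    hence "\<mu> (C \<union> D) = \<mu> C + \<mu> D" using that by (intro sbm_add[OF s])
    moreover have "\<mu> (C \<union> D) \<le> pos_part \<mu> (A \<union> B)" using that by (intro pp_upper[OF s]) auto
    ultimately show ?thesis by simp
  qed
  have kk: "pos_part \<mu> A \<le> pos_part \<mu> (A \<union> B) - \<mu> D" if D: "D \<in> sets borel" "D \<subseteq> B" for D
  proof (rule pp_least)
    fix C assume "C \<in> sets borel" "C \<subseteq> A"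
    from key[OF this D] show "\<mu> C \<le> pos_part \<mu> (A \<union> B) - \<mu> D" by simp
  qed
  have "pos_part \<mu> B \<le> pos_part \<mu> (A \<union> B) - pos_part \<mu> A"
  proof (rule pp_least)
    fix D assume "D \<in> sets borel" "D \<subseteq> B"
    from kk[OF this] show "\<mu> D \<le> pos_part \<mu> (A \<union> B) - pos_part \<mu> A" by simp
  qed
  thus "pos_part \<mu> A + pos_part \<mu> B \<le> pos_part \<mu> (A \<union> B)" by simp
qed

lemma pp_finite_union:
  fixes n :: nat
  assumes s: "signed_borel_measure \<mu>" and r: "range A \<subseteq> sets borel" and d: "disjoint_family A"
  shows "pos_part \<mu> (\<Union>i<n. A i) = (\<Sum>i<n. pos_part \<mu> (A i))"
proof (induction n)
  case 0 then show ?case using pp_empty[OF s] by simp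
next
  case (Suc n)
  have "(\<Union>i<Suc n. A i) = (\<Union>i<n. A i) \<union> A n" by (auto simp: lessThan_Suc)
  moreover have "(\<Union>i<n. A i) \<inter> A n = {}" using d unfolding disjoint_family_on_def by (auto, metis IntI empty_iff less_irrefl)
  moreover have "(\<Union>i<n. A i) \<in> sets borel" using r by auto
  ultimately show ?case using Suc r by (simp add: pp_add[OF s])
qed

lemma pp_sums:
  assumes s: "signed_borel_measure \<mu>" and r: "range A \<subseteq> sets borel" and d: "disjoint_family A"
  shows "(\<lambda>i. pos_part \<mu> (A i)) sums pos_part \<mu> (\<Union>i. A i)"
proof -
  have ps: "(\<Sum>i<n. pos_part \<mu> (A i)) \<le> pos_part \<mu> (\<Union>i. A i)" for n
    using pp_finite_union[OF s r d, of n] pp_mono[OF s, of "\<Union>i<n. A i" "\<Union>i. A i"] by auto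
  have sm: "summable (\<lambda>i. pos_part \<mu> (A i))"
    by (rule summableI_nonneg_bounded[OF pp_nonneg[OF s] ps])
  have le1: "(\<Sum>i. pos_part \<mu> (A i)) \<le> pos_part \<mu> (\<Union>i. A i)"
    by (rule suminf_le_const[OF sm ps])
  have le2: "pos_part \<mu> (\<Union>i. A i) \<le> (\<Sum>i. pos_part \<mu> (A i))"
  proof (rule pp_least)
    fix C assume C: "C \<in> sets borel" "C \<subseteq> (\<Union>i. A i)"
    have r': "range (\<lambda>i. C \<inter> A i) \<subseteq> sets borel" using C r by auto
    have d': "disjoint_family (\<lambda>i. C \<inter> A i)" using d by (auto simp: disjoint_family_on_def)
    have "(\<lambda>i. \<mu> (C \<inter> A i)) sums \<mu> (\<Union>i. C \<inter> A i)" by (rule sbm_sums[OF s r' d'])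
    moreover have "(\<Union>i. C \<inter> A i) = C" using C by auto
    ultimately have cs: "(\<lambda>i. \<mu> (C \<inter> A i)) sums \<mu> C" by simp
    have "\<mu> C = (\<Sum>i. \<mu> (C \<inter> A i))" using cs by (simp add: sums_iff)
    also have "\<dots> \<le> (\<Sum>i. pos_part \<mu> (A i))"
      using cs sm r C(1) by (intro suminf_le pp_upper[OF s]) (auto simp: sums_iff)
    finally show "\<mu> C \<le> (\<Sum>i. pos_part \<mu> (A i))" .
  qed
  show ?thesis using sm le1 le2 by (simp add: sums_iff)
qed

lemma pp_jordan:
  assumes s: "signed_borel_measure \<mu>" and A: "A \<in> sets borel"
  shows "\<mu> A = pos_part \<mu> A - neg_part \<mu> A"
proof -
  have s': "signed_borel_measure (\<lambda>B. - \<mu> B)" by (rule sbm_neg[OF s])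
  have 1: "pos_part \<mu> A \<le> \<mu> A + neg_part \<mu> A"
  proof (rule pp_least)
    fix B assume B: "B \<in> sets borel" "B \<subseteq> A"
    have "\<mu> (A - B) = \<mu> A - \<mu> B" using sbm_diff[OF s A B(1)] B(2) by (simp add: Int_absorb1)
    moreover have "- \<mu> (A - B) \<le> neg_part \<mu> A"
      unfolding neg_part_def using A B by (intro pp_upper[OF s']) auto
    ultimately show "\<mu> B \<le> \<mu> A + neg_part \<mu> A" by simp
  qed
  have 2: "neg_part \<mu> A \<le> pos_part \<mu> A - \<mu> A"
    unfolding neg_part_def
  proof (rule pp_least)
    fix C assume C: "C \<in> sets borel" "C \<subseteq> A"
    have "\<mu> (A - C) = \<mu> A - \<mu> C" using sbm_diff[OF s A C(1)] C(2) by (simp add: Int_absorb1)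
    moreover have "\<mu> (A - C) \<le> pos_part \<mu> A" using A C by (intro pp_upper[OF s]) auto
    ultimately show "- \<mu> C \<le> pos_part \<mu> A - \<mu> A" by simp
  qed
  show ?thesis using 1 2 by simp
qed

lemma np_eq: "neg_part \<mu> = pos_part (\<lambda>B. - \<mu> B)"
  by (simp add: neg_part_def[abs_def])

lemma pp_idem:
  assumes s: "signed_borel_measure \<mu>"
  shows "pos_part (pos_part \<mu>) = pos_part \<mu>"
proof
  fix A
  show "pos_part (pos_part \<mu>) A = pos_part \<mu> A"
  proof (rule antisym)
    show "pos_part (pos_part \<mu>) A \<le> pos_part \<mu> A"
      by (rule pp_least, rule pp_mono[OF s]) auto
    have bd: "bdd_above {pos_part \<mu> B | B. B \<in> sets borel \<and> B \<subseteq> A}"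
      by (rule bdd_aboveI[of _ "pos_part \<mu> A"]) (auto intro: pp_mono[OF s])
    show "pos_part \<mu> A \<le> pos_part (pos_part \<mu>) A"
    proof (rule pp_least)
      fix B assume B: "B \<in> sets borel" "B \<subseteq> A"
      have "\<mu> B \<le> pos_part \<mu> B" using B by (intro pp_upper[OF s]) auto
      also have "\<dots> \<le> pos_part (pos_part \<mu>) A"
        unfolding pos_part_def[of "pos_part \<mu>"] using B bd by (intro cSup_upper) auto
      finally show "\<mu> B \<le> pos_part (pos_part \<mu>) A" .
    qed
  qed
qed

lemma np_pp_zero:
  assumes s: "signed_borel_measure \<mu>"
  shows "neg_part (pos_part \<mu>) A = 0"
  unfolding neg_part_def pos_part_def[of "\<lambda>B. - pos_part \<mu> B"]
proof (rule cSup_eq_maximum)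
  show "0 \<in> {- pos_part \<mu> B | B. B \<in> sets borel \<and> B \<subseteq> A}"
    using pp_empty[OF s] by (intro CollectI exI[of _ "{}"]) auto
  show "x \<le> 0" if "x \<in> {- pos_part \<mu> B | B. B \<in> sets borel \<and> B \<subseteq> A}" for x
    using that pp_nonneg[OF s] by auto
qed


lemma sa_borel: "sigma_algebra UNIV (sets (borel :: 'a::topological_space measure))"
  using sets.sigma_algebra_axioms[of "borel :: 'a measure"] by simp

lemma pm_facts:
  assumes s: "signed_borel_measure (\<mu> :: 'a::topological_space set \<Rightarrow> real)"
  shows "sets (pos_measure \<mu>) = sets borel" "space (pos_measure \<mu>) = UNIV"
    "\<And>A. A \<in> sets borel \<Longrightarrow> emeasure (pos_measure \<mu>) A = ennreal (pos_part \<mu> A)"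
proof -
  show 1: "sets (pos_measure \<mu>) = sets borel" unfolding pos_measure_def
    using sigma_algebra.sigma_sets_eq[OF sa_borel] by (subst sets_measure_of) auto
  show "space (pos_measure \<mu>) = UNIV" unfolding pos_measure_def
    by (rule space_measure_of) auto
  fix A :: "'a set" assume A: "A \<in> sets borel"
  have pos: "positive (sets borel) (\<lambda>A. ennreal (pos_part \<mu> A))"
    unfolding positive_def using pp_empty[OF s] by simp
  have ca: "countably_additive (sets borel) (\<lambda>A. ennreal (pos_part \<mu> A))"
    unfolding countably_additive_def
  proof (intro allI impI)
    fix F :: "nat \<Rightarrow> 'a set" assume F: "range F \<subseteq> sets borel" "disjoint_family F"
      "(\<Union>i. F i) \<in> sets borel"
    have sm: "(\<lambda>i. pos_part \<mu> (F i)) sums pos_part \<mu> (\<Union>i. F i)" by (rule pp_sums[OF s F(1,2)])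
    have "(\<Sum>i. ennreal (pos_part \<mu> (F i))) = ennreal (\<Sum>i. pos_part \<mu> (F i))"
      by (rule suminf_ennreal2) (rule pp_nonneg[OF s], rule sums_summable[OF sm])
    also have "(\<Sum>i. pos_part \<mu> (F i)) = pos_part \<mu> (\<Union>i. F i)" by (rule sums_unique[OF sm, symmetric])
    finally show "(\<Sum>i. ennreal (pos_part \<mu> (F i))) = ennreal (pos_part \<mu> (\<Union>i. F i))" .
  qed
  show "emeasure (pos_measure \<mu>) A = ennreal (pos_part \<mu> A)" unfolding pos_measure_def
    by (rule emeasure_measure_of_sigma[OF sa_borel pos ca A])
qed

lemma pm_finite:
  assumes s: "signed_borel_measure (\<mu> :: 'a::topological_space set \<Rightarrow> real)"
  shows "finite_measure (pos_measure \<mu>)"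
  by (rule finite_measureI) (simp add: pm_facts[OF s])

lemma pm_measure:
  assumes s: "signed_borel_measure (\<mu> :: 'a::topological_space set \<Rightarrow> real)" and A: "A \<in> sets borel"
  shows "measure (pos_measure \<mu>) A = pos_part \<mu> A"
  unfolding measure_def using pm_facts(3)[OF s A] pp_nonneg[OF s] by simp

lemma nm_eq: "neg_measure \<mu> = pos_measure (\<lambda>B. - \<mu> B)"
  by (simp add: neg_measure_def pos_measure_def neg_part_def[abs_def])

lemma nm_facts:
  assumes s: "signed_borel_measure (\<mu> :: 'a::topological_space set \<Rightarrow> real)"
  shows "sets (neg_measure \<mu>) = sets borel" "space (neg_measure \<mu>) = UNIV"
    "finite_measure (neg_measure \<mu>)"
    "\<And>A. A \<in> sets borel \<Longrightarrow> measure (neg_measure \<mu>) A = neg_part \<mu> A"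
  unfolding nm_eq np_eq
  by (rule pm_facts[OF sbm_neg[OF s]] pm_finite[OF sbm_neg[OF s]] pm_measure[OF sbm_neg[OF s]])+

lemma integral_zero_measure:
  "integral\<^sup>L (measure_of UNIV (sets (borel :: 'a::topological_space measure)) (\<lambda>A. 0)) f = (0::real)"
proof -
  have "measure_of UNIV (sets (borel :: 'a measure)) (\<lambda>A. 0) = null_measure borel"
    by (simp add: null_measure_def)
  thus ?thesis by simp
qed

lemma si_pos:
  assumes s: "signed_borel_measure (\<mu> :: 'a::topological_space set \<Rightarrow> real)"
  shows "signed_integral (pos_part \<mu>) f = integral\<^sup>L (pos_measure \<mu>) f"
proof -
  have "neg_measure (pos_part \<mu>) = measure_of UNIV (sets borel) (\<lambda>A. 0)"
    unfolding neg_measure_def np_pp_zero[OF s] ennreal_0 ..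
  hence "integral\<^sup>L (neg_measure (pos_part \<mu>)) f = 0"
    by (simp only: integral_zero_measure)
  moreover have "pos_measure (pos_part \<mu>) = pos_measure \<mu>"
    unfolding pos_measure_def pp_idem[OF s] ..
  ultimately show ?thesis unfolding signed_integral_def by (metis diff_zero)
qed

lemma si_neg:
  assumes s: "signed_borel_measure (\<mu> :: 'a::topological_space set \<Rightarrow> real)"
  shows "signed_integral (neg_part \<mu>) f = integral\<^sup>L (neg_measure \<mu>) f"
proof -
  have "signed_integral (pos_part (\<lambda>B. - \<mu> B)) f = integral\<^sup>L (pos_measure (\<lambda>B. - \<mu> B)) f"
    by (rule si_pos[OF sbm_neg[OF s]])
  thus ?thesis unfolding np_eq[of \<mu>] nm_eq[of \<mu>] .
qed


lemma compact_closed_mz: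
  assumes mz: "metrizable_space (euclidean :: 'a::topological_space topology)" and K: "compact (K :: 'a set)"
  shows "closed K"
proof -
  have "closedin euclidean K"
    by (rule compactin_imp_closedin[OF metrizable_imp_Hausdorff_space[OF mz]]) (simp add: K)
  thus ?thesis unfolding closed_closedin .
qed

lemma urysohn01:
  assumes mz: "metrizable_space (euclidean :: 'a::topological_space topology)"
    and S: "closed (S :: 'a set)" and T: "closed T" and d: "S \<inter> T = {}"
  shows "\<exists>u. continuous_on UNIV u \<and> (\<forall>x. 0 \<le> u x \<and> u x \<le> (1::real)) \<and> (\<forall>x\<in>S. u x = 0) \<and> (\<forall>x\<in>T. u x = 1)"
proof -
  have n: "normal_space (euclidean :: 'a topology)" by (rule metrizable_imp_normal_space[OF mz])
  have cS: "closedin euclidean S" using S unfolding closed_closedin .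
  have cT: "closedin euclidean T" using T unfolding closed_closedin .
  have dST: "disjnt S T" using d by (simp add: disjnt_def)
  obtain u where u: "continuous_map euclidean (top_of_set {0..1::real}) u" "u ` S \<subseteq> {0}" "u ` T \<subseteq> {1}"
    using Urysohn_lemma[OF n cS cT dST zero_le_one] by blast
  have "continuous_map euclidean euclideanreal u" using u(1) continuous_map_in_subtopology by blast
  hence c: "continuous_on UNIV u" using continuous_map_iff_continuous[of UNIV u] by simp
  have "u x \<in> {0..1}" for x using continuous_map_image_subset_topspace[OF u(1)] by (auto simp: image_subset_iff)
  thus ?thesis using c u(2,3) by (intro exI[of _ u]) auto
qed

lemma lc_nbhd:
  assumes mz: "metrizable_space (euclidean :: 'a::topological_space topology)"
    and lc: "locally_compact_space (euclidean :: 'a topology)" and K: "compact (K :: 'a set)"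
  shows "\<exists>U L. open U \<and> compact L \<and> closed L \<and> K \<subseteq> U \<and> U \<subseteq> L"
proof -
  have H: "Hausdorff_space (euclidean :: 'a topology)" by (rule metrizable_imp_Hausdorff_space[OF mz])
  note iffD1[OF locally_compact_space_compact_closed_compact[OF disjI1[OF H]] lc]
  hence "\<exists>U L. openin euclidean U \<and> compactin euclidean L \<and> closedin euclidean L \<and> K \<subseteq> U \<and> U \<subseteq> (L :: 'a set)"
    using K by simp
  then obtain U L where UL: "openin euclidean U" "compactin euclidean L" "closedin euclidean L" "K \<subseteq> U" "U \<subseteq> L"
    by blast
  have "open U" by (rule iffD2[OF open_openin UL(1)])
  moreover have "closed L" by (rule iffD2[OF closed_closedin UL(3)])
  moreover have "compact L" using UL(2) by simp
  ultimately show ?thesis using UL(4,5) by blast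
qed

lemma cc_bounded:
  fixes f :: "'a::topological_space \<Rightarrow> real"
  assumes c: "continuous_on UNIV f" and k: "compact (closure {x. f x \<noteq> 0})"
  shows "\<exists>B. \<forall>x. \<bar>f x\<bar> \<le> B"
proof -
  have c': "continuous_on (closure {x. f x \<noteq> 0}) f"
    by (rule continuous_on_subset[OF c]) simp
  have "compact (f ` closure {x. f x \<noteq> 0})"
    by (rule compact_continuous_image[OF c' k])
  hence "bounded (f ` closure {x. f x \<noteq> 0})" by (rule compact_imp_bounded)
  then obtain B where B0: "\<forall>y \<in> f ` closure {x. f x \<noteq> 0}. \<bar>y\<bar> \<le> B"
    unfolding bounded_real by blast
  have B: "\<And>y. y \<in> f ` closure {x. f x \<noteq> 0} \<Longrightarrow> \<bar>y\<bar> \<le> B" using B0 by blast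
  have "\<bar>f x\<bar> \<le> max B 0" for x
  proof (cases "f x = 0")
    case True thus ?thesis by simp
  next
    case False
    hence "x \<in> closure {x. f x \<noteq> 0}" using closure_subset[of "{x. f x \<noteq> 0}"] by auto
    hence "\<bar>f x\<bar> \<le> B" using B by blast
    thus ?thesis by simp
  qed
  thus ?thesis by blast
qed

lemma fm_integrable:
  fixes f :: "'a::topological_space \<Rightarrow> real"
  assumes fm: "finite_measure M" and sM: "sets M = sets borel" and m: "f \<in> borel_measurable borel"
    and B: "\<And>x. \<bar>f x\<bar> \<le> B"
  shows "integrable M f"
proof -
  have "measurable M (borel :: real measure) = measurable borel borel"
    by (rule measurable_cong_sets[OF sM refl])
  hence "f \<in> borel_measurable M" using m by simp
  thus ?thesis using B by (intro finite_measure.integrable_const_bound[OF fm, of _ B]) auto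
qed

lemma fm_int_le_ind:
  fixes f :: "'a::topological_space \<Rightarrow> real"
  assumes fm: "finite_measure M" and sM: "sets M = sets borel" and m: "f \<in> borel_measurable borel"
    and B: "\<And>x. \<bar>f x\<bar> \<le> B" and A: "A \<in> sets borel" and le: "\<And>x. f x \<le> c * indicator A x"
  shows "integral\<^sup>L M f \<le> c * measure M A"
proof -
  have sp: "space M = UNIV" using sets_eq_imp_space_eq[OF sM] by simp
  have iA: "integrable M (\<lambda>x. c * indicator A x :: real)"
  proof -
    have "emeasure M A < \<infinity>" using finite_measure.emeasure_finite[OF fm] by (simp add: less_top[symmetric])
    thus ?thesis using A sM by (intro integrable_mult_right integrable_real_indicator) auto
  qed
  have "integral\<^sup>L M f \<le> integral\<^sup>L M (\<lambda>x. c * indicator A x)"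
    by (rule integral_mono[OF fm_integrable[OF fm sM m B] iA]) (rule le)
  also have "\<dots> = c * measure M A" using sp by simp
  finally show ?thesis .
qed

lemma fm_int_ge_ind:
  fixes f :: "'a::topological_space \<Rightarrow> real"
  assumes fm: "finite_measure M" and sM: "sets M = sets borel" and m: "f \<in> borel_measurable borel"
    and B: "\<And>x. \<bar>f x\<bar> \<le> B" and A: "A \<in> sets borel" and le: "\<And>x. c * indicator A x \<le> f x"
  shows "c * measure M A \<le> integral\<^sup>L M f"
proof -
  have sp: "space M = UNIV" using sets_eq_imp_space_eq[OF sM] by simp
  have iA: "integrable M (\<lambda>x. c * indicator A x :: real)"
  proof -
    have "emeasure M A < \<infinity>" using finite_measure.emeasure_finite[OF fm] by (simp add: less_top[symmetric])
    thus ?thesis using A sM by (intro integrable_mult_right integrable_real_indicator) auto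
  qed
  have le2: "integral\<^sup>L M (\<lambda>x. c * indicator A x) \<le> integral\<^sup>L M f"
    by (rule integral_mono[OF iA fm_integrable[OF fm sM m B]]) (rule le)
  have eq: "integral\<^sup>L M (\<lambda>x. c * indicator A x) = c * measure M A" using sp by simp
  from le2 show ?thesis unfolding eq .
qed


lemma np_facts:
  assumes s: "signed_borel_measure \<mu>"
  shows "\<And>A. 0 \<le> neg_part \<mu> A"
    "\<And>A A'. A \<subseteq> A' \<Longrightarrow> neg_part \<mu> A \<le> neg_part \<mu> A'"
    "\<And>A B. A \<in> sets borel \<Longrightarrow> B \<in> sets borel \<Longrightarrow> A \<inter> B = {} \<Longrightarrow>
       neg_part \<mu> (A \<union> B) = neg_part \<mu> A + neg_part \<mu> B"
  unfolding np_eq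
  by (rule pp_nonneg[OF sbm_neg[OF s]] pp_mono[OF sbm_neg[OF s]] pp_add[OF sbm_neg[OF s]];
      assumption)+

lemma pp_diff:
  assumes s: "signed_borel_measure \<mu>" and A: "A \<in> sets borel" and C: "C \<in> sets borel" and CA: "C \<subseteq> A"
  shows "pos_part \<mu> (A - C) = pos_part \<mu> A - pos_part \<mu> C"
proof -
  have "A = (A - C) \<union> C" using CA by auto
  hence "pos_part \<mu> A = pos_part \<mu> (A - C) + pos_part \<mu> C"
    using pp_add[OF s, of "A - C" C] A C by auto
  thus ?thesis by simp
qed

lemma np_diff:
  assumes s: "signed_borel_measure \<mu>" and A: "A \<in> sets borel" and C: "C \<in> sets borel" and CA: "C \<subseteq> A"
  shows "neg_part \<mu> (A - C) = neg_part \<mu> A - neg_part \<mu> C"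
  unfolding np_eq by (rule pp_diff[OF sbm_neg[OF s] A C CA])

lemma var_diff:
  assumes s: "signed_borel_measure \<mu>" and A: "A \<in> sets borel" and C: "C \<in> sets borel" and CA: "C \<subseteq> A"
  shows "variation \<mu> (A - C) = variation \<mu> A - variation \<mu> C"
  unfolding variation_def using pp_diff[OF assms] np_diff[OF assms] by simp

lemma var_facts:
  assumes s: "signed_borel_measure \<mu>"
  shows "\<And>A. pos_part \<mu> A \<le> variation \<mu> A" "\<And>A. neg_part \<mu> A \<le> variation \<mu> A"
    "\<And>A. 0 \<le> variation \<mu> A"
    "\<And>A A'. A \<subseteq> A' \<Longrightarrow> variation \<mu> A \<le> variation \<mu> A'"
  unfolding variation_def
  using pp_nonneg[OF s] np_facts(1)[OF s] pp_mono[OF s] np_facts(2)[OF s]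
  by (simp_all add: add_mono add_nonneg_nonneg)

lemma compact_borel:
  assumes mz: "metrizable_space (euclidean :: 'a::topological_space topology)" and K: "compact (K :: 'a set)"
  shows "K \<in> sets borel"
  using compact_closed_mz[OF mz K] by (rule borel_closed)

lemma radon_inner:
  assumes mz: "metrizable_space (euclidean :: 'a::topological_space topology)"
    and r: "signed_radon_measure (\<mu> :: 'a set \<Rightarrow> real)" and A: "A \<in> sets borel" and e: "e > 0"
  shows "\<exists>C. compact C \<and> C \<subseteq> A \<and> variation \<mu> (A - C) < e"
proof -
  have s: "signed_borel_measure \<mu>" using r by (simp add: signed_radon_measure_def)
  have eq: "variation \<mu> A = Sup {variation \<mu> K | K. compact K \<and> K \<subseteq> A}"
    using r A by (simp add: signed_radon_measure_def)
  have "variation \<mu> A - e < Sup {variation \<mu> K | K. compact K \<and> K \<subseteq> A}" using eq e by simp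
  from less_cSupD[OF _ this] obtain C where C: "compact C" "C \<subseteq> A" "variation \<mu> A - e < variation \<mu> C"
    by auto
  have "variation \<mu> (A - C) = variation \<mu> A - variation \<mu> C"
    by (rule var_diff[OF s A compact_borel[OF mz C(1)] C(2)])
  thus ?thesis using C by (intro exI[of _ C]) auto
qed

lemma radon_outer:
  assumes mz: "metrizable_space (euclidean :: 'a::topological_space topology)"
    and lc: "locally_compact_space (euclidean :: 'a topology)"
    and r: "signed_radon_measure (\<mu> :: 'a set \<Rightarrow> real)" and K: "compact K" and e: "e > 0"
  shows "\<exists>U L. open U \<and> compact L \<and> closed L \<and> K \<subseteq> U \<and> U \<subseteq> L \<and> variation \<mu> (U - K) < e"
proof -
  obtain V L where VL: "open V" "compact L" "closed L" "K \<subseteq> V" "V \<subseteq> L"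
    using lc_nbhd[OF mz lc K] by blast
  have Kc: "closed K" by (rule compact_closed_mz[OF mz K])
  have VK: "V - K \<in> sets borel" using VL(1) Kc by auto
  obtain C where C: "compact C" "C \<subseteq> V - K" "variation \<mu> ((V - K) - C) < e"
    using radon_inner[OF mz r VK e] by blast
  have Cc: "closed C" by (rule compact_closed_mz[OF mz C(1)])
  have "open (V - C)" using VL(1) Cc by auto
  moreover have "(V - C) - K = (V - K) - C" by auto
  ultimately show ?thesis using VL C by (intro exI[of _ "V - C"] exI[of _ L]) auto
qed

lemma bump:
  assumes mz: "metrizable_space (euclidean :: 'a::topological_space topology)"
    and K: "compact (K :: 'a set)" and U: "open U" and L: "compact L" "closed L" and KU: "K \<subseteq> U" and UL: "U \<subseteq> L"
  shows "\<exists>h. continuous_on UNIV h \<and> compact (closure {x. h x \<noteq> 0}) \<and> (\<forall>x. 0 \<le> h x \<and> h x \<le> (1::real))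
     \<and> (\<forall>x\<in>K. h x = 1) \<and> (\<forall>x. x \<notin> U \<longrightarrow> h x = 0)"
proof -
  have a1: "closed (- U)" using U by auto
  have a2: "closed K" by (rule compact_closed_mz[OF mz K])
  have a3: "(- U) \<inter> K = {}" using KU by blast
  obtain h where h: "continuous_on UNIV h" "\<forall>x. 0 \<le> h x \<and> h x \<le> (1::real)"
    "\<forall>x\<in>- U. h x = 0" "\<forall>x\<in>K. h x = 1"
    using urysohn01[OF mz a1 a2 a3] by blast
  have "{x. h x \<noteq> 0} \<subseteq> L" using h(3) UL by auto
  hence "closure {x. h x \<noteq> 0} \<subseteq> L" using L(2) by (rule closure_minimal)
  hence "closure {x. h x \<noteq> 0} = L \<inter> closure {x. h x \<noteq> 0}" by auto
  moreover have "compact (L \<inter> closure {x. h x \<noteq> 0})" using L(1) by (rule compact_Int_closed) simp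
  ultimately have "compact (closure {x. h x \<noteq> 0})" by simp
  thus ?thesis using h by (intro exI[of _ h]) auto
qed

lemma sep_fun:
  assumes mz: "metrizable_space (euclidean :: 'a::topological_space topology)"
    and K1: "compact (K1 :: 'a set)" and K2: "compact K2" and d: "K1 \<inter> K2 = {}"
    and U: "open U" and L: "compact L" "closed L" and KU: "K1 \<subseteq> U" "K2 \<subseteq> U" and UL: "U \<subseteq> L"
  shows "\<exists>g. continuous_on UNIV g \<and> compact (closure {x. g x \<noteq> 0}) \<and> (\<forall>x. -1 \<le> g x \<and> g x \<le> (1::real))
     \<and> (\<forall>x\<in>K1. g x = 1) \<and> (\<forall>x\<in>K2. g x = -1) \<and> (\<forall>x. x \<notin> U \<longrightarrow> g x = 0)"
proof -
  have cU: "closed (- U)" using U by auto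
  have c1: "closed K1" by (rule compact_closed_mz[OF mz K1])
  have c2: "closed K2" by (rule compact_closed_mz[OF mz K2])
  obtain u1 where u1: "continuous_on UNIV u1" "\<forall>x. 0 \<le> u1 x \<and> u1 x \<le> (1::real)"
    "\<forall>x\<in>K2 \<union> - U. u1 x = 0" "\<forall>x\<in>K1. u1 x = 1"
  proof -
    have "closed (K2 \<union> - U)" using c2 cU by (rule closed_Un)
    moreover have "(K2 \<union> - U) \<inter> K1 = {}" using d KU by blast
    ultimately show ?thesis using urysohn01[OF mz _ c1] that by blast
  qed
  obtain u2 where u2: "continuous_on UNIV u2" "\<forall>x. 0 \<le> u2 x \<and> u2 x \<le> (1::real)"
    "\<forall>x\<in>K1 \<union> - U. u2 x = 0" "\<forall>x\<in>K2. u2 x = 1"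
  proof -
    have "closed (K1 \<union> - U)" using c1 cU by (rule closed_Un)
    moreover have "(K1 \<union> - U) \<inter> K2 = {}" using d KU by blast
    ultimately show ?thesis using urysohn01[OF mz _ c2] that by blast
  qed
  define g where "g x = u1 x - u2 x" for x
  have gc: "continuous_on UNIV g" unfolding g_def by (intro continuous_on_diff u1(1) u2(1))
  have "{x. g x \<noteq> 0} \<subseteq> L"
  proof
    fix x assume "x \<in> {x. g x \<noteq> 0}"
    hence gx: "g x \<noteq> 0" by simp
    have "x \<in> U"
    proof (rule ccontr)
      assume "x \<notin> U"
      hence "u1 x = 0" "u2 x = 0" using u1(3) u2(3) by auto
      thus False using gx unfolding g_def by simp
    qed
    thus "x \<in> L" using UL by auto
  qed
  hence "closure {x. g x \<noteq> 0} \<subseteq> L" using L(2) by (rule closure_minimal)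
  hence "closure {x. g x \<noteq> 0} = L \<inter> closure {x. g x \<noteq> 0}" by auto
  moreover have "compact (L \<inter> closure {x. g x \<noteq> 0})" using L(1) by (rule compact_Int_closed) simp
  ultimately have "compact (closure {x. g x \<noteq> 0})" by simp
  moreover have "\<forall>x. -1 \<le> g x \<and> g x \<le> 1"
  proof
    fix x
    have "0 \<le> u1 x" "u1 x \<le> 1" "0 \<le> u2 x" "u2 x \<le> 1" using u1(2) u2(2) by auto
    thus "-1 \<le> g x \<and> g x \<le> 1" unfolding g_def by linarith
  qed
  moreover have "\<forall>x\<in>K1. g x = 1" using u1(4) u2(3) unfolding g_def by auto
  moreover have "\<forall>x\<in>K2. g x = -1" using u1(3) u2(4) unfolding g_def by auto
  moreover have "\<forall>x. x \<notin> U \<longrightarrow> g x = 0" using u1(3) u2(3) unfolding g_def by simp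
  ultimately show ?thesis using gc by (intro exI[of _ g]) auto
qed


definition tv :: "('a::topological_space set \<Rightarrow> real) \<Rightarrow> ('a \<Rightarrow> real) \<Rightarrow> real" where
  "tv \<mu> f = integral\<^sup>L (pos_measure \<mu>) f + integral\<^sup>L (neg_measure \<mu>) f"

lemma tv_le:
  fixes \<mu> :: "'a::topological_space set \<Rightarrow> real" and g :: "'a \<Rightarrow> real"
  assumes s: "signed_borel_measure \<mu>" and m: "g \<in> borel_measurable borel" and B: "\<And>x. \<bar>g x\<bar> \<le> B"
    and A: "A \<in> sets borel" and le: "\<And>x. g x \<le> c * indicator A x"
  shows "tv \<mu> g \<le> c * variation \<mu> A"
proof -
  have 1: "integral\<^sup>L (pos_measure \<mu>) g \<le> c * pos_part \<mu> A"
    using fm_int_le_ind[OF pm_finite[OF s] pm_facts(1)[OF s] m B A le] pm_measure[OF s A] by simp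
  have 2: "integral\<^sup>L (neg_measure \<mu>) g \<le> c * neg_part \<mu> A"
    using fm_int_le_ind[OF nm_facts(3)[OF s] nm_facts(1)[OF s] m B A le] nm_facts(4)[OF s A] by simp
  show ?thesis using 1 2 unfolding tv_def variation_def by (simp add: distrib_left)
qed

lemma tv_ge:
  fixes \<mu> :: "'a::topological_space set \<Rightarrow> real" and g :: "'a \<Rightarrow> real"
  assumes s: "signed_borel_measure \<mu>" and m: "g \<in> borel_measurable borel" and B: "\<And>x. \<bar>g x\<bar> \<le> B"
    and A: "A \<in> sets borel" and le: "\<And>x. c * indicator A x \<le> g x"
  shows "c * variation \<mu> A \<le> tv \<mu> g"
proof -
  have 1: "c * pos_part \<mu> A \<le> integral\<^sup>L (pos_measure \<mu>) g"
    using fm_int_ge_ind[OF pm_finite[OF s] pm_facts(1)[OF s] m B A le] pm_measure[OF s A] by simp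
  have 2: "c * neg_part \<mu> A \<le> integral\<^sup>L (neg_measure \<mu>) g"
    using fm_int_ge_ind[OF nm_facts(3)[OF s] nm_facts(1)[OF s] m B A le] nm_facts(4)[OF s A] by simp
  show ?thesis using 1 2 unfolding tv_def variation_def by (simp add: distrib_left)
qed

lemma pm_integrable:
  fixes \<mu> :: "'a::topological_space set \<Rightarrow> real" and g :: "'a \<Rightarrow> real"
  assumes s: "signed_borel_measure \<mu>" and m: "g \<in> borel_measurable borel" and B: "\<And>x. \<bar>g x\<bar> \<le> B"
  shows "integrable (pos_measure \<mu>) g" "integrable (neg_measure \<mu>) g"
  by (rule fm_integrable[OF pm_finite[OF s] pm_facts(1)[OF s] m B])
     (rule fm_integrable[OF nm_facts(3)[OF s] nm_facts(1)[OF s] m B])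

lemma tv_sum:
  fixes \<mu> :: "'a::topological_space set \<Rightarrow> real" and g :: "nat \<Rightarrow> 'a \<Rightarrow> real"
  assumes s: "signed_borel_measure \<mu>" and m: "\<And>k. g k \<in> borel_measurable borel"
    and B: "\<And>k x. \<bar>g k x\<bar> \<le> B"
  shows "tv \<mu> (\<lambda>x. \<Sum>k<m. g k x) = (\<Sum>k<m. tv \<mu> (g k))"
proof -
  have "integral\<^sup>L (pos_measure \<mu>) (\<lambda>x. \<Sum>k<m. g k x) = (\<Sum>k<m. integral\<^sup>L (pos_measure \<mu>) (g k))"
    by (rule Bochner_Integration.integral_sum) (rule pm_integrable(1)[OF s m B])
  moreover have "integral\<^sup>L (neg_measure \<mu>) (\<lambda>x. \<Sum>k<m. g k x) = (\<Sum>k<m. integral\<^sup>L (neg_measure \<mu>) (g k))"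
    by (rule Bochner_Integration.integral_sum) (rule pm_integrable(2)[OF s m B])
  ultimately show ?thesis unfolding tv_def by (simp add: sum.distrib)
qed

lemma cc_facts:
  fixes f :: "'a::topological_space \<Rightarrow> real"
  assumes c: "continuous_on UNIV f" and k: "compact (closure {x. f x \<noteq> 0})"
  shows "f \<in> borel_measurable borel" "\<exists>B. \<forall>x. \<bar>f x\<bar> \<le> B"
  by (rule borel_measurable_continuous_onI[OF c]) (rule cc_bounded[OF c k])

lemma fwd_limsup:
  assumes mz: "metrizable_space (euclidean :: 'a::topological_space topology)"
    and lc: "locally_compact_space (euclidean :: 'a topology)"
    and rs: "\<And>n. signed_radon_measure (\<mu>s n)" and r: "signed_radon_measure (\<mu> :: 'a set \<Rightarrow> real)"
    and conv: "\<And>f. continuous_on UNIV f \<Longrightarrow> compact (closure {x. f x \<noteq> 0}) \<Longrightarrow>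
                 (\<lambda>n. tv (\<mu>s n) f) \<longlonglongrightarrow> tv \<mu> f"
    and K: "compact K"
  shows "limsup (\<lambda>n. ereal (variation (\<mu>s n) K)) \<le> ereal (variation \<mu> K)"
proof (rule ereal_le_epsilon2)
  fix e :: real assume e: "0 < e"
  have ss: "signed_borel_measure (\<mu>s n)" for n using rs by (simp add: signed_radon_measure_def)
  have s: "signed_borel_measure \<mu>" using r by (simp add: signed_radon_measure_def)
  obtain U L where UL: "open U" "compact L" "closed L" "K \<subseteq> U" "U \<subseteq> L" "variation \<mu> (U - K) < e"
    using radon_outer[OF mz lc r K e] by blast
  obtain h where h: "continuous_on UNIV h" "compact (closure {x. h x \<noteq> 0})" "\<forall>x. 0 \<le> h x \<and> h x \<le> (1::real)"
    "\<forall>x\<in>K. h x = 1" "\<forall>x. x \<notin> U \<longrightarrow> h x = 0"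
    using bump[OF mz K UL(1) UL(2) UL(3) UL(4) UL(5)] by blast
  have hm: "h \<in> borel_measurable borel" by (rule borel_measurable_continuous_onI[OF h(1)])
  have hB: "\<bar>h x\<bar> \<le> 1" for x using h(3) by (simp add: abs_le_iff)
  have Kb: "K \<in> sets borel" by (rule compact_borel[OF mz K])
  have Ub: "U \<in> sets borel" using UL(1) by auto
  have le_n: "variation (\<mu>s n) K \<le> tv (\<mu>s n) h" for n
  proof -
    have "1 * variation (\<mu>s n) K \<le> tv (\<mu>s n) h"
      by (rule tv_ge[OF ss hm hB Kb]) (use h(3,4) in \<open>auto simp: indicator_def\<close>)
    thus ?thesis by simp
  qed
  have le_lim: "tv \<mu> h \<le> variation \<mu> U"
  proof -
    have "tv \<mu> h \<le> 1 * variation \<mu> U"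
      by (rule tv_le[OF s hm hB Ub]) (use h(3,5) in \<open>auto simp: indicator_def\<close>)
    thus ?thesis by simp
  qed
  have "variation \<mu> (U - K) = variation \<mu> U - variation \<mu> K" by (rule var_diff[OF s Ub Kb UL(4)])
  hence vU: "variation \<mu> U < variation \<mu> K + e" using UL(6) by simp
  have lim: "(\<lambda>n. ereal (tv (\<mu>s n) h)) \<longlonglongrightarrow> ereal (tv \<mu> h)"
    by (intro tendsto_ereal conv h(1) h(2))
  have "limsup (\<lambda>n. ereal (variation (\<mu>s n) K)) \<le> limsup (\<lambda>n. ereal (tv (\<mu>s n) h))"
    by (rule Limsup_mono) (simp add: le_n)
  also have "\<dots> = ereal (tv \<mu> h)" by (rule lim_imp_Limsup[OF _ lim]) simp
  also have "\<dots> \<le> ereal (variation \<mu> K) + ereal e" using le_lim vU by simp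
  finally show "limsup (\<lambda>n. ereal (variation (\<mu>s n) K)) \<le> ereal (variation \<mu> K) + ereal e" .
qed


lemma int_mono_pm:
  fixes \<mu> :: "'a::topological_space set \<Rightarrow> real" and f g :: "'a \<Rightarrow> real"
  assumes s: "signed_borel_measure \<mu>"
    and fm: "f \<in> borel_measurable borel" and fB: "\<And>x. \<bar>f x\<bar> \<le> B1"
    and gm: "g \<in> borel_measurable borel" and gB: "\<And>x. \<bar>g x\<bar> \<le> B2"
    and le: "\<And>x. f x \<le> g x"
  shows "integral\<^sup>L (pos_measure \<mu>) f \<le> integral\<^sup>L (pos_measure \<mu>) g"
    "integral\<^sup>L (neg_measure \<mu>) f \<le> integral\<^sup>L (neg_measure \<mu>) g"
  by (rule integral_mono[OF pm_integrable(1)[OF s fm fB] pm_integrable(1)[OF s gm gB]], rule le)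
     (rule integral_mono[OF pm_integrable(2)[OF s fm fB] pm_integrable(2)[OF s gm gB]], rule le)

lemma ind_diff_facts:
  fixes A B :: "'a::topological_space set"
  assumes A: "A \<in> sets borel" and B: "B \<in> sets borel"
  shows "(\<lambda>x. indicator A x - indicator B x :: real) \<in> borel_measurable borel"
    "\<And>x. \<bar>indicator A x - indicator B x :: real\<bar> \<le> 1"
  using A B by (auto simp: indicator_def)

lemma int_ind_diff:
  fixes \<mu> :: "'a::topological_space set \<Rightarrow> real"
  assumes s: "signed_borel_measure \<mu>" and A: "A \<in> sets borel" and B: "B \<in> sets borel"
  shows "integral\<^sup>L (pos_measure \<mu>) (\<lambda>x. indicator A x - indicator B x) = pos_part \<mu> A - pos_part \<mu> B"
    "integral\<^sup>L (neg_measure \<mu>) (\<lambda>x. indicator A x - indicator B x) = neg_part \<mu> A - neg_part \<mu> B"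
proof -
  have iA: "(indicator A :: 'a \<Rightarrow> real) \<in> borel_measurable borel" "\<And>x. \<bar>indicator A x :: real\<bar> \<le> 1"
    using A by (auto simp: indicator_def)
  have iB: "(indicator B :: 'a \<Rightarrow> real) \<in> borel_measurable borel" "\<And>x. \<bar>indicator B x :: real\<bar> \<le> 1"
    using B by (auto simp: indicator_def)
  have sp: "space (pos_measure \<mu>) = UNIV" "space (neg_measure \<mu>) = UNIV"
    using pm_facts(2)[OF s] nm_facts(2)[OF s] by auto
  show "integral\<^sup>L (pos_measure \<mu>) (\<lambda>x. indicator A x - indicator B x) = pos_part \<mu> A - pos_part \<mu> B"
    using Bochner_Integration.integral_diff[OF pm_integrable(1)[OF s iA] pm_integrable(1)[OF s iB]]
      pm_measure[OF s A] pm_measure[OF s B] sp by simp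
  show "integral\<^sup>L (neg_measure \<mu>) (\<lambda>x. indicator A x - indicator B x) = neg_part \<mu> A - neg_part \<mu> B"
    using Bochner_Integration.integral_diff[OF pm_integrable(2)[OF s iA] pm_integrable(2)[OF s iB]]
      nm_facts(4)[OF s A] nm_facts(4)[OF s B] sp by simp
qed

lemma pp_subadd:
  assumes s: "signed_borel_measure \<mu>" and X: "X \<in> sets borel" and Y: "Y \<in> sets borel"
  shows "pos_part \<mu> (X \<union> Y) \<le> pos_part \<mu> X + pos_part \<mu> Y"
proof -
  have "X \<union> Y = X \<union> (Y - X)" by auto
  hence "pos_part \<mu> (X \<union> Y) = pos_part \<mu> X + pos_part \<mu> (Y - X)"
    using pp_add[OF s X, of "Y - X"] X Y by auto
  moreover have "pos_part \<mu> (Y - X) \<le> pos_part \<mu> Y" by (rule pp_mono[OF s]) auto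
  ultimately show ?thesis by simp
qed

lemma np_subadd:
  assumes s: "signed_borel_measure \<mu>" and X: "X \<in> sets borel" and Y: "Y \<in> sets borel"
  shows "neg_part \<mu> (X \<union> Y) \<le> neg_part \<mu> X + neg_part \<mu> Y"
  unfolding np_eq by (rule pp_subadd[OF sbm_neg[OF s] X Y])

lemma lower_open:
  fixes \<mu>s :: "nat \<Rightarrow> 'a::topological_space set \<Rightarrow> real" and \<mu> :: "'a set \<Rightarrow> real"
  assumes mz: "metrizable_space (euclidean :: 'a topology)"
    and rs: "\<And>n. signed_radon_measure (\<mu>s n)" and r: "signed_radon_measure \<mu>"
    and conv: "\<And>f. continuous_on UNIV f \<Longrightarrow> compact (closure {x. f x \<noteq> 0}) \<Longrightarrow>
                 (\<lambda>n. signed_integral (\<mu>s n) f) \<longlonglongrightarrow> signed_integral \<mu> f"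
    and U: "open U" and L: "compact L" "closed L" and UL: "U \<subseteq> L" and e: "e > 0"
  shows "eventually (\<lambda>n. variation \<mu> U - e < variation (\<mu>s n) U) sequentially"
proof -
  have ss: "signed_borel_measure (\<mu>s n)" for n using rs by (simp add: signed_radon_measure_def)
  have s: "signed_borel_measure \<mu>" using r by (simp add: signed_radon_measure_def)
  define e' where "e' = e / 20"
  have e': "e' > 0" using e by (simp add: e'_def)
  have Ub: "U \<in> sets borel" using U by auto
  obtain B1 where B1: "B1 \<in> sets borel" "B1 \<subseteq> U" "pos_part \<mu> U - e' < \<mu> B1"
    using pp_approx[OF s e'] by blast
  obtain B2 where B2: "B2 \<in> sets borel" "B2 \<subseteq> U" "neg_part \<mu> U - e' < - \<mu> B2"
    using pp_approx[OF sbm_neg[OF s] e', of U] unfolding np_eq by blast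
  have j1: "\<mu> B1 = pos_part \<mu> B1 - neg_part \<mu> B1" by (rule pp_jordan[OF s B1(1)])
  have j2: "\<mu> B2 = pos_part \<mu> B2 - neg_part \<mu> B2" by (rule pp_jordan[OF s B2(1)])
  have d1: "pos_part \<mu> (U - B1) = pos_part \<mu> U - pos_part \<mu> B1" by (rule pp_diff[OF s Ub B1(1,2)])
  have d2: "neg_part \<mu> (U - B2) = neg_part \<mu> U - neg_part \<mu> B2" by (rule np_diff[OF s Ub B2(1,2)])
  have f1: "pos_part \<mu> (U - B1) + neg_part \<mu> B1 < e'" using B1(3) j1 d1 by simp
  have f2: "neg_part \<mu> (U - B2) + pos_part \<mu> B2 < e'" using B2(3) j2 d2 by simp
  define B3 where "B3 = B2 - B1"
  have B3: "B3 \<in> sets borel" "B3 \<subseteq> U" "B1 \<inter> B3 = {}" using B1 B2 by (auto simp: B3_def)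
  have f3: "pos_part \<mu> B3 < e'"
    using pp_mono[OF s, of B3 B2] f2 np_facts(1)[OF s, of "U - B2"] by (auto simp: B3_def)
  have "neg_part \<mu> (U - B3) \<le> neg_part \<mu> ((U - B2) \<union> B1)" by (rule np_facts(2)[OF s]) (auto simp: B3_def)
  also have "\<dots> \<le> neg_part \<mu> (U - B2) + neg_part \<mu> B1" by (rule np_subadd[OF s]) (use Ub B2 B1 in auto)
  finally have f4: "neg_part \<mu> (U - B3) < 2 * e'" using f1 f2 pp_nonneg[OF s, of "U - B1"] pp_nonneg[OF s, of B2] by simp
  obtain K1 where K1: "compact K1" "K1 \<subseteq> B1" "variation \<mu> (B1 - K1) < e'"
    using radon_inner[OF mz r B1(1) e'] by blast
  obtain K2 where K2: "compact K2" "K2 \<subseteq> B3" "variation \<mu> (B3 - K2) < e'"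
    using radon_inner[OF mz r B3(1) e'] by blast
  have K1b: "K1 \<in> sets borel" by (rule compact_borel[OF mz K1(1)])
  have K2b: "K2 \<in> sets borel" by (rule compact_borel[OF mz K2(1)])
  have K12: "K1 \<inter> K2 = {}" using K1(2) K2(2) B3(3) by auto
  have K1U: "K1 \<subseteq> U" and K2U: "K2 \<subseteq> U" using K1(2) K2(2) B1(2) B3(2) by auto
  have "pos_part \<mu> (U - K1) \<le> pos_part \<mu> ((U - B1) \<union> (B1 - K1))" by (rule pp_mono[OF s]) auto
  also have "\<dots> \<le> pos_part \<mu> (U - B1) + pos_part \<mu> (B1 - K1)" by (rule pp_subadd[OF s]) (use Ub B1 K1b in auto)
  finally have g1: "pos_part \<mu> (U - K1) < 2 * e'"
    using f1 np_facts(1)[OF s, of B1] var_facts(1)[OF s, of "B1 - K1"] K1(3) by simp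
  have "neg_part \<mu> (U - K2) \<le> neg_part \<mu> ((U - B3) \<union> (B3 - K2))" by (rule np_facts(2)[OF s]) auto
  also have "\<dots> \<le> neg_part \<mu> (U - B3) + neg_part \<mu> (B3 - K2)" by (rule np_subadd[OF s]) (use Ub B3 K2b in auto)
  finally have g2: "neg_part \<mu> (U - K2) < 3 * e'"
    using f4 var_facts(2)[OF s, of "B3 - K2"] K2(3) by simp
  obtain g where g: "continuous_on UNIV g" "compact (closure {x. g x \<noteq> 0})" "\<forall>x. -1 \<le> g x \<and> g x \<le> (1::real)"
     "\<forall>x\<in>K1. g x = 1" "\<forall>x\<in>K2. g x = -1" "\<forall>x. x \<notin> U \<longrightarrow> g x = 0"
    using sep_fun[OF mz K1(1) K2(1) K12 U L K1U K2U UL] by blast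
  have gm: "g \<in> borel_measurable borel" by (rule borel_measurable_continuous_onI[OF g(1)])
  have gB: "\<bar>g x\<bar> \<le> 1" for x using g(3) by (simp add: abs_le_iff)
  have UK1: "U - K1 \<in> sets borel" "U - K2 \<in> sets borel" using Ub K1b K2b by auto
  have lp: "pos_part \<mu> K1 - pos_part \<mu> (U - K1) \<le> integral\<^sup>L (pos_measure \<mu>) g"
  proof -
    have "integral\<^sup>L (pos_measure \<mu>) (\<lambda>x. indicator K1 x - indicator (U - K1) x) \<le> integral\<^sup>L (pos_measure \<mu>) g"
      by (rule int_mono_pm(1)[OF s ind_diff_facts[OF K1b UK1(1)] gm gB])
         (use g(3,4,6) K1U in \<open>auto simp: indicator_def\<close>)
    thus ?thesis using int_ind_diff(1)[OF s K1b UK1(1)] by simp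
  qed
  have ln: "integral\<^sup>L (neg_measure \<mu>) g \<le> neg_part \<mu> (U - K2) - neg_part \<mu> K2"
  proof -
    have "integral\<^sup>L (neg_measure \<mu>) g \<le> integral\<^sup>L (neg_measure \<mu>) (\<lambda>x. indicator (U - K2) x - indicator K2 x)"
      by (rule int_mono_pm(2)[OF s gm gB ind_diff_facts[OF UK1(2) K2b]])
         (use g(3,5,6) K2U in \<open>auto simp: indicator_def\<close>)
    thus ?thesis using int_ind_diff(2)[OF s UK1(2) K2b] by simp
  qed
  have pK1: "pos_part \<mu> K1 = pos_part \<mu> U - pos_part \<mu> (U - K1)"
    using pp_diff[OF s Ub K1b K1U] by simp
  have nK2: "neg_part \<mu> K2 = neg_part \<mu> U - neg_part \<mu> (U - K2)"
    using np_diff[OF s Ub K2b K2U] by simp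
  have Sg: "variation \<mu> U - e / 2 < signed_integral \<mu> g"
    using lp ln pK1 nK2 g1 g2 unfolding signed_integral_def variation_def e'_def by simp
  have Sn: "signed_integral (\<mu>s n) g \<le> variation (\<mu>s n) U" for n
  proof -
    have "integral\<^sup>L (pos_measure (\<mu>s n)) g \<le> 1 * measure (pos_measure (\<mu>s n)) U"
      by (rule fm_int_le_ind[OF pm_finite[OF ss] pm_facts(1)[OF ss] gm gB Ub])
         (use g(3,6) in \<open>auto simp: indicator_def\<close>)
    moreover have "-1 * measure (neg_measure (\<mu>s n)) U \<le> integral\<^sup>L (neg_measure (\<mu>s n)) g"
      by (rule fm_int_ge_ind[OF nm_facts(3)[OF ss] nm_facts(1)[OF ss] gm gB Ub])
         (use g(3,6) in \<open>auto simp: indicator_def\<close>)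
    ultimately show ?thesis using pm_measure[OF ss Ub] nm_facts(4)[OF ss Ub]
      unfolding signed_integral_def variation_def by simp
  qed
  have "eventually (\<lambda>n. signed_integral \<mu> g - e / 2 < signed_integral (\<mu>s n) g) sequentially"
    by (rule order_tendstoD(1)[OF conv[OF g(1) g(2)]]) (use e in simp)
  thus ?thesis
  proof (rule eventually_mono)
    fix n assume "signed_integral \<mu> g - e / 2 < signed_integral (\<mu>s n) g"
    thus "variation \<mu> U - e < variation (\<mu>s n) U" using Sg Sn[of n] by simp
  qed
qed


lemma phi_sum:
  fixes e t :: real
  assumes t: "0 \<le> t" and e: "e > 0"
  shows "(\<Sum>k<m. min e (max 0 (t - real k * e))) = min t (real m * e)"
proof (induction m)
  case 0 then show ?case using t by simp
next
  case (Suc m)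
  have "(\<Sum>k<Suc m. min e (max 0 (t - real k * e))) = min t (real m * e) + min e (max 0 (t - real m * e))"
    using Suc by simp
  also have "\<dots> = min t (real (Suc m) * e)"
  proof (cases "t \<le> real m * e")
    case True
    hence "min t (real m * e) = t" "max 0 (t - real m * e) = 0" by auto
    moreover have "min t (real (Suc m) * e) = t" using True e by (simp add: algebra_simps)
    ultimately show ?thesis using e by simp
  next
    case False
    hence "min t (real m * e) = real m * e" "max 0 (t - real m * e) = t - real m * e" by auto
    moreover have "real (Suc m) * e = real m * e + e" by (simp add: algebra_simps)
    ultimately show ?thesis by (simp add: min_def)
  qed
  finally show ?case .
qed

lemma step_conv:
  fixes \<mu>s :: "nat \<Rightarrow> 'a::topological_space set \<Rightarrow> real" and \<mu> :: "'a set \<Rightarrow> real" and f :: "'a \<Rightarrow> real"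
  assumes mz: "metrizable_space (euclidean :: 'a topology)"
    and ss: "\<And>n. signed_borel_measure (\<mu>s n)" and s: "signed_borel_measure \<mu>"
    and fc: "continuous_on UNIV f" and fk: "compact (closure {x. f x \<noteq> 0})" and fpos: "\<And>x. 0 \<le> f x"
    and up: "\<And>K d. compact K \<Longrightarrow> d > 0 \<Longrightarrow>
               eventually (\<lambda>n. variation (\<mu>s n) K < variation \<mu> K + d) sequentially"
    and lo: "\<And>V d. open V \<Longrightarrow> V \<subseteq> closure {x. f x \<noteq> 0} \<Longrightarrow> d > 0 \<Longrightarrow>
               eventually (\<lambda>n. variation \<mu> V - d < variation (\<mu>s n) V) sequentially"
  shows "(\<lambda>n. tv (\<mu>s n) f) \<longlonglongrightarrow> tv \<mu> f"
proof (rule tendstoI)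
  fix \<eta> :: real assume \<eta>: "\<eta> > 0"
  define K0 where "K0 = closure {x. f x \<noteq> 0}"
  have K0c: "compact K0" using fk by (simp add: K0_def)
  obtain B where B: "\<And>x. \<bar>f x\<bar> \<le> B" using cc_bounded[OF fc fk] by blast
  define C where "C = variation \<mu> UNIV"
  have vC: "variation \<mu> A \<le> C" for A unfolding C_def by (rule var_facts(4)[OF s]) simp
  have C0: "0 \<le> C" unfolding C_def by (rule var_facts(3)[OF s])
  define \<epsilon> where "\<epsilon> = \<eta> / (C + 2)"
  have \<epsilon>: "\<epsilon> > 0" using \<eta> C0 by (simp add: \<epsilon>_def)
  have \<epsilon>C: "\<epsilon> * (C + 1) < \<eta>"
  proof -
    have "\<epsilon> * (C + 2) = \<eta>" using C0 by (simp add: \<epsilon>_def)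
    thus ?thesis using \<epsilon> by (simp add: algebra_simps)
  qed
  define m where "m = nat \<lceil>B / \<epsilon>\<rceil>"
  have Bm: "B \<le> real m * \<epsilon>"
  proof -
    have "B / \<epsilon> \<le> real m" unfolding m_def by linarith
    thus ?thesis using \<epsilon> by (simp add: field_simps)
  qed
  define g where "g k x = min \<epsilon> (max 0 (f x - real k * \<epsilon>))" for k x
  have fsum: "f = (\<lambda>x. \<Sum>k<m. g k x)"
  proof
    fix x
    have "(\<Sum>k<m. g k x) = min (f x) (real m * \<epsilon>)" unfolding g_def by (rule phi_sum[OF fpos \<epsilon>])
    also have "\<dots> = f x" using B[of x] Bm by simp
    finally show "f x = (\<Sum>k<m. g k x)" by simp
  qed
  have gc: "continuous_on UNIV (g k)" for k unfolding g_def by (intro continuous_intros fc)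
  have gm: "g k \<in> borel_measurable borel" for k by (rule borel_measurable_continuous_onI[OF gc])
  have gB: "\<bar>g k x\<bar> \<le> \<epsilon>" for k x using \<epsilon> unfolding g_def by simp
  have tvs: "tv \<nu> f = (\<Sum>k<m. tv \<nu> (g k))" if "signed_borel_measure \<nu>" for \<nu>
    by (subst fsum) (rule tv_sum[OF that gm gB])
  define Kk where "Kk k = K0 \<inter> {x. real k * \<epsilon> \<le> f x}" for k
  define Uk where "Uk k = {x. real k * \<epsilon> < f x}" for k
  have Kkc: "compact (Kk k)" for k unfolding Kk_def
    by (rule compact_Int_closed[OF K0c closed_Collect_le]) (intro continuous_intros, rule fc)
  have Kkb: "Kk k \<in> sets borel" for k by (rule compact_borel[OF mz Kkc])
  have Uko: "open (Uk k)" for k unfolding Uk_def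
    by (rule open_Collect_less) (intro continuous_intros, rule fc)
  have Ukb: "Uk k \<in> sets borel" for k using Uko by auto
  have UkK0: "Uk k \<subseteq> K0" for k
  proof
    fix x assume "x \<in> Uk k"
    hence "real k * \<epsilon> < f x" unfolding Uk_def by simp
    moreover have "0 \<le> real k * \<epsilon>" using \<epsilon> by simp
    ultimately have "f x \<noteq> 0" by linarith
    hence "x \<in> {x. f x \<noteq> 0}" by simp
    thus "x \<in> K0" unfolding K0_def by (rule subsetD[OF closure_subset])
  qed
  have p1: "g k x \<le> \<epsilon> * indicator (Kk k) x" for k x
  proof (cases "real k * \<epsilon> < f x")
    case True
    hence "x \<in> Uk k" by (simp add: Uk_def)
    hence "x \<in> Kk k" using UkK0 True unfolding Kk_def by auto
    thus ?thesis unfolding g_def by simp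
  next
    case False thus ?thesis using \<epsilon> unfolding g_def by (simp add: indicator_def)
  qed
  have p2: "\<epsilon> * indicator (Kk (Suc k)) x \<le> g k x" for k x
  proof (cases "x \<in> Kk (Suc k)")
    case True
    hence "real (Suc k) * \<epsilon> \<le> f x" unfolding Kk_def by simp
    hence "\<epsilon> \<le> f x - real k * \<epsilon>" by (simp add: algebra_simps)
    thus ?thesis using True unfolding g_def by simp
  next
    case False thus ?thesis using \<epsilon> unfolding g_def by simp
  qed
  have p3: "g k x \<le> \<epsilon> * indicator (Uk k) x" for k x
  proof (cases "real k * \<epsilon> < f x")
    case True thus ?thesis unfolding g_def Uk_def by simp
  next
    case False thus ?thesis using \<epsilon> unfolding g_def Uk_def by simp
  qed
  have p4: "\<epsilon> * indicator (Uk (Suc k)) x \<le> g k x" for k x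
  proof (cases "x \<in> Uk (Suc k)")
    case True
    hence "real (Suc k) * \<epsilon> < f x" unfolding Uk_def by simp
    hence "\<epsilon> \<le> f x - real k * \<epsilon>" by (simp add: algebra_simps)
    thus ?thesis using True unfolding g_def by simp
  next
    case False thus ?thesis using \<epsilon> unfolding g_def by simp
  qed
  define \<delta> where "\<delta> = 1 / real (Suc m)"
  have \<delta>: "\<delta> > 0" by (simp add: \<delta>_def)
  have \<delta>m: "\<epsilon> * (real m * \<delta>) \<le> \<epsilon>"
  proof -
    have "real m * \<delta> \<le> 1" by (simp add: \<delta>_def field_simps)
    thus ?thesis using \<epsilon> by (simp add: mult_left_le)
  qed
  have evU: "eventually (\<lambda>n. \<forall>k\<in>{..<m}. variation (\<mu>s n) (Kk k) < variation \<mu> (Kk k) + \<delta>) sequentially"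
    by (rule eventually_ball_finite) (auto intro: up[OF Kkc \<delta>])
  have evL: "eventually (\<lambda>n. \<forall>k\<in>{..<m}. variation \<mu> (Uk (Suc k)) - \<delta> < variation (\<mu>s n) (Uk (Suc k))) sequentially"
  proof (rule eventually_ball_finite)
    show "\<forall>k\<in>{..<m}. eventually (\<lambda>n. variation \<mu> (Uk (Suc k)) - \<delta> < variation (\<mu>s n) (Uk (Suc k))) sequentially"
    proof
      fix k
      have "Uk (Suc k) \<subseteq> closure {x. f x \<noteq> 0}" using UkK0[of "Suc k"] unfolding K0_def .
      thus "eventually (\<lambda>n. variation \<mu> (Uk (Suc k)) - \<delta> < variation (\<mu>s n) (Uk (Suc k))) sequentially"
        by (rule lo[OF Uko _ \<delta>])
    qed
  qed simp
  have tv_lim_ge: "\<epsilon> * (\<Sum>k<m. variation \<mu> (Kk (Suc k))) \<le> tv \<mu> f"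
  proof -
    have "\<epsilon> * (\<Sum>k<m. variation \<mu> (Kk (Suc k))) = (\<Sum>k<m. \<epsilon> * variation \<mu> (Kk (Suc k)))"
      by (simp add: sum_distrib_left)
    also have "\<dots> \<le> (\<Sum>k<m. tv \<mu> (g k))"
      by (rule sum_mono, rule tv_ge[OF s gm gB Kkb p2])
    finally show ?thesis using tvs[OF s] by simp
  qed
  have tv_lim_le: "tv \<mu> f \<le> \<epsilon> * (\<Sum>k<m. variation \<mu> (Uk k))"
  proof -
    have "tv \<mu> f = (\<Sum>k<m. tv \<mu> (g k))" by (rule tvs[OF s])
    also have "\<dots> \<le> (\<Sum>k<m. \<epsilon> * variation \<mu> (Uk k))"
      by (rule sum_mono, rule tv_le[OF s gm gB Ukb p3])
    finally show ?thesis by (simp add: sum_distrib_left)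
  qed
  have telK: "(\<Sum>k<m. variation \<mu> (Kk k)) \<le> (\<Sum>k<m. variation \<mu> (Kk (Suc k))) + C"
  proof -
    have "(\<Sum>k<m. variation \<mu> (Kk (Suc k)) - variation \<mu> (Kk k)) = variation \<mu> (Kk m) - variation \<mu> (Kk 0)"
      by (rule sum_lessThan_telescope)
    hence "(\<Sum>k<m. variation \<mu> (Kk (Suc k))) - (\<Sum>k<m. variation \<mu> (Kk k)) = variation \<mu> (Kk m) - variation \<mu> (Kk 0)"
      by (simp add: sum_subtractf)
    thus ?thesis using var_facts(3)[OF s, of "Kk m"] vC[of "Kk 0"] by simp
  qed
  have telU: "(\<Sum>k<m. variation \<mu> (Uk k)) \<le> (\<Sum>k<m. variation \<mu> (Uk (Suc k))) + C"
  proof -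
    have "(\<Sum>k<m. variation \<mu> (Uk (Suc k)) - variation \<mu> (Uk k)) = variation \<mu> (Uk m) - variation \<mu> (Uk 0)"
      by (rule sum_lessThan_telescope)
    hence "(\<Sum>k<m. variation \<mu> (Uk (Suc k))) - (\<Sum>k<m. variation \<mu> (Uk k)) = variation \<mu> (Uk m) - variation \<mu> (Uk 0)"
      by (simp add: sum_subtractf)
    thus ?thesis using var_facts(3)[OF s, of "Uk m"] vC[of "Uk 0"] by simp
  qed
  have "eventually (\<lambda>n. dist (tv (\<mu>s n) f) (tv \<mu> f) < \<eta>) sequentially"
    using evU evL
  proof eventually_elim
    case (elim n)
    have upn: "tv (\<mu>s n) f \<le> tv \<mu> f + \<epsilon> * C + \<epsilon> * (real m * \<delta>)"
    proof -
      have "tv (\<mu>s n) f = (\<Sum>k<m. tv (\<mu>s n) (g k))" by (rule tvs[OF ss])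
      also have "\<dots> \<le> (\<Sum>k<m. \<epsilon> * variation (\<mu>s n) (Kk k))"
        by (rule sum_mono, rule tv_le[OF ss gm gB Kkb p1])
      also have "\<dots> \<le> (\<Sum>k<m. \<epsilon> * (variation \<mu> (Kk k) + \<delta>))"
      proof (rule sum_mono)
        fix k assume k: "k \<in> {..<m}"
        have "variation (\<mu>s n) (Kk k) \<le> variation \<mu> (Kk k) + \<delta>" using bspec[OF elim(1) k] by (rule less_imp_le)
        thus "\<epsilon> * variation (\<mu>s n) (Kk k) \<le> \<epsilon> * (variation \<mu> (Kk k) + \<delta>)" using \<epsilon> by (intro mult_left_mono) auto
      qed
      also have "\<dots> = \<epsilon> * (\<Sum>k<m. variation \<mu> (Kk k)) + \<epsilon> * (real m * \<delta>)"
        by (simp add: sum_distrib_left sum.distrib distrib_left)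
      also have "\<dots> \<le> \<epsilon> * ((\<Sum>k<m. variation \<mu> (Kk (Suc k))) + C) + \<epsilon> * (real m * \<delta>)"
        using telK \<epsilon> by (intro add_right_mono mult_left_mono) auto
      also have "\<dots> \<le> tv \<mu> f + \<epsilon> * C + \<epsilon> * (real m * \<delta>)"
        using tv_lim_ge by (simp add: distrib_left)
      finally show ?thesis .
    qed
    have lon: "tv \<mu> f - \<epsilon> * C - \<epsilon> * (real m * \<delta>) \<le> tv (\<mu>s n) f"
    proof -
      have "tv \<mu> f - \<epsilon> * C - \<epsilon> * (real m * \<delta>) \<le> \<epsilon> * (\<Sum>k<m. variation \<mu> (Uk (Suc k))) - \<epsilon> * (real m * \<delta>)"
      proof -
        have "\<epsilon> * (\<Sum>k<m. variation \<mu> (Uk k)) \<le> \<epsilon> * ((\<Sum>k<m. variation \<mu> (Uk (Suc k))) + C)"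
          using telU \<epsilon> by (intro mult_left_mono) auto
        thus ?thesis using tv_lim_le by (simp add: distrib_left)
      qed
      also have "\<dots> = (\<Sum>k<m. \<epsilon> * (variation \<mu> (Uk (Suc k)) - \<delta>))"
        by (simp add: sum_distrib_left sum_subtractf right_diff_distrib)
      also have "\<dots> \<le> (\<Sum>k<m. \<epsilon> * variation (\<mu>s n) (Uk (Suc k)))"
      proof (rule sum_mono)
        fix k assume k: "k \<in> {..<m}"
        have "variation \<mu> (Uk (Suc k)) - \<delta> \<le> variation (\<mu>s n) (Uk (Suc k))" using bspec[OF elim(2) k] by (rule less_imp_le)
        thus "\<epsilon> * (variation \<mu> (Uk (Suc k)) - \<delta>) \<le> \<epsilon> * variation (\<mu>s n) (Uk (Suc k))" using \<epsilon> by (intro mult_left_mono) auto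
      qed
      also have "\<dots> \<le> (\<Sum>k<m. tv (\<mu>s n) (g k))"
        by (rule sum_mono, rule tv_ge[OF ss gm gB Ukb p4])
      also have "\<dots> = tv (\<mu>s n) f" by (rule tvs[OF ss, symmetric])
      finally show ?thesis .
    qed
    show ?case using upn lon \<delta>m \<epsilon>C unfolding dist_real_def by (simp add: abs_less_iff algebra_simps)
  qed
  thus "eventually (\<lambda>n. dist (tv (\<mu>s n) f) (tv \<mu> f) < \<eta>) sequentially" .
qed


lemma cc_sub:
  fixes A B :: "'a::topological_space set"
  assumes "compact (closure A)" and "B \<subseteq> A"
  shows "compact (closure B)"
proof -
  have "closure B \<subseteq> closure A" using assms(2) by (rule closure_mono)
  hence "closure B = closure A \<inter> closure B" by blast
  moreover have "compact (closure A \<inter> closure B)" by (rule compact_Int_closed[OF assms(1)]) simp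
  ultimately show ?thesis by simp
qed

lemma tv_diff:
  fixes \<mu> :: "'a::topological_space set \<Rightarrow> real" and f g :: "'a \<Rightarrow> real"
  assumes s: "signed_borel_measure \<mu>"
    and fm: "f \<in> borel_measurable borel" and fB: "\<And>x. \<bar>f x\<bar> \<le> B1"
    and gm: "g \<in> borel_measurable borel" and gB: "\<And>x. \<bar>g x\<bar> \<le> B2"
  shows "tv \<mu> (\<lambda>x. f x - g x) = tv \<mu> f - tv \<mu> g"
  unfolding tv_def
  using Bochner_Integration.integral_diff[OF pm_integrable(1)[OF s fm fB] pm_integrable(1)[OF s gm gB]]
    Bochner_Integration.integral_diff[OF pm_integrable(2)[OF s fm fB] pm_integrable(2)[OF s gm gB]]
  by simp

theorem proposition2p7:
  fixes \<mu>s :: "nat \<Rightarrow> 'a::topological_space set \<Rightarrow> real" and \<mu> :: "'a set \<Rightarrow> real"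
  assumes "metrizable_space (euclidean :: 'a topology)"
    and "locally_compact_space (euclidean :: 'a topology)"
    and "\<And>n. signed_radon_measure (\<mu>s n)"
    and "signed_radon_measure \<mu>"
  shows "(vague_conv (\<lambda>n. pos_part (\<mu>s n)) (pos_part \<mu>) \<and>
          vague_conv (\<lambda>n. neg_part (\<mu>s n)) (neg_part \<mu>))
     \<longleftrightarrow> (vague_conv \<mu>s \<mu> \<and>
          (\<forall>K. compact K \<longrightarrow>
             limsup (\<lambda>n. ereal (variation (\<mu>s n) K)) \<le> ereal (variation \<mu> K)))"
proof -
  note mz = assms(1) and lc = assms(2) and rs = assms(3) and r = assms(4)
  have ss: "signed_borel_measure (\<mu>s n)" for n using rs by (simp add: signed_radon_measure_def)
  have s: "signed_borel_measure \<mu>" using r by (simp add: signed_radon_measure_def)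
  define Cc where "Cc f \<longleftrightarrow> continuous_on UNIV f \<and> compact (closure {x. f x \<noteq> (0::real)})" for f :: "'a \<Rightarrow> real"
  have vp: "vague_conv (\<lambda>n. pos_part (\<mu>s n)) (pos_part \<mu>) \<longleftrightarrow>
      (\<forall>f. Cc f \<longrightarrow> (\<lambda>n. integral\<^sup>L (pos_measure (\<mu>s n)) f) \<longlonglongrightarrow> integral\<^sup>L (pos_measure \<mu>) f)"
    unfolding vague_conv_def Cc_def si_pos[OF ss] si_pos[OF s] by blast
  have vn: "vague_conv (\<lambda>n. neg_part (\<mu>s n)) (neg_part \<mu>) \<longleftrightarrow>
      (\<forall>f. Cc f \<longrightarrow> (\<lambda>n. integral\<^sup>L (neg_measure (\<mu>s n)) f) \<longlonglongrightarrow> integral\<^sup>L (neg_measure \<mu>) f)"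
    unfolding vague_conv_def Cc_def si_neg[OF ss] si_neg[OF s] by blast
  have vs: "vague_conv \<mu>s \<mu> \<longleftrightarrow>
      (\<forall>f. Cc f \<longrightarrow> (\<lambda>n. signed_integral (\<mu>s n) f) \<longlonglongrightarrow> signed_integral \<mu> f)"
    unfolding vague_conv_def Cc_def by blast
  show ?thesis
  proof
    assume H: "vague_conv (\<lambda>n. pos_part (\<mu>s n)) (pos_part \<mu>) \<and> vague_conv (\<lambda>n. neg_part (\<mu>s n)) (neg_part \<mu>)"
    have P: "\<And>f. Cc f \<Longrightarrow> (\<lambda>n. integral\<^sup>L (pos_measure (\<mu>s n)) f) \<longlonglongrightarrow> integral\<^sup>L (pos_measure \<mu>) f"
      using H vp by blast
    have N: "\<And>f. Cc f \<Longrightarrow> (\<lambda>n. integral\<^sup>L (neg_measure (\<mu>s n)) f) \<longlonglongrightarrow> integral\<^sup>L (neg_measure \<mu>) f"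
      using H vn by blast
    have "vague_conv \<mu>s \<mu>"
      unfolding vs signed_integral_def
    proof (intro allI impI)
      fix f assume "Cc f"
      show "(\<lambda>n. integral\<^sup>L (pos_measure (\<mu>s n)) f - integral\<^sup>L (neg_measure (\<mu>s n)) f)
         \<longlonglongrightarrow> integral\<^sup>L (pos_measure \<mu>) f - integral\<^sup>L (neg_measure \<mu>) f"
        by (rule tendsto_diff[OF P[OF \<open>Cc f\<close>] N[OF \<open>Cc f\<close>]])
    qed
    moreover have "limsup (\<lambda>n. ereal (variation (\<mu>s n) K)) \<le> ereal (variation \<mu> K)" if K: "compact K" for K
    proof (rule fwd_limsup[OF mz lc rs r _ K])
      fix f :: "'a \<Rightarrow> real" assume "continuous_on UNIV f" "compact (closure {x. f x \<noteq> 0})"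
      hence "Cc f" by (simp add: Cc_def)
      thus "(\<lambda>n. tv (\<mu>s n) f) \<longlonglongrightarrow> tv \<mu> f" unfolding tv_def by (intro tendsto_add P N)
    qed
    ultimately show "vague_conv \<mu>s \<mu> \<and> (\<forall>K. compact K \<longrightarrow>
             limsup (\<lambda>n. ereal (variation (\<mu>s n) K)) \<le> ereal (variation \<mu> K))" by blast
  next
    assume H: "vague_conv \<mu>s \<mu> \<and> (\<forall>K. compact K \<longrightarrow>
             limsup (\<lambda>n. ereal (variation (\<mu>s n) K)) \<le> ereal (variation \<mu> K))"
    have S: "\<And>f. continuous_on UNIV f \<Longrightarrow> compact (closure {x. f x \<noteq> 0}) \<Longrightarrow>
              (\<lambda>n. signed_integral (\<mu>s n) f) \<longlonglongrightarrow> signed_integral \<mu> f"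
      using H vs Cc_def by blast
    have up: "eventually (\<lambda>n. variation (\<mu>s n) K < variation \<mu> K + d) sequentially"
      if K: "compact K" and d: "d > 0" for K d
    proof -
      have "limsup (\<lambda>n. ereal (variation (\<mu>s n) K)) \<le> ereal (variation \<mu> K)" using H K by blast
      also have "\<dots> < ereal (variation \<mu> K + d)" using d by simp
      finally have "eventually (\<lambda>n. ereal (variation (\<mu>s n) K) < ereal (variation \<mu> K + d)) sequentially"
        by (rule Limsup_lessD)
      thus ?thesis by simp
    qed
    have T: "(\<lambda>n. tv (\<mu>s n) f) \<longlonglongrightarrow> tv \<mu> f" if f: "Cc f" for f
    proof -
      have fc: "continuous_on UNIV f" and fk: "compact (closure {x. f x \<noteq> 0})" using f by (auto simp: Cc_def)
      have nonneg_case: "(\<lambda>n. tv (\<mu>s n) h) \<longlonglongrightarrow> tv \<mu> h"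
        if hc: "continuous_on UNIV h" and hk: "compact (closure {x. h x \<noteq> 0})" and hp: "\<And>x. 0 \<le> h x" for h
      proof (rule step_conv[OF mz ss s hc hk hp up])
        fix V d assume V: "open V" "V \<subseteq> closure {x. h x \<noteq> 0}" and d: "(d::real) > 0"
        show "eventually (\<lambda>n. variation \<mu> V - d < variation (\<mu>s n) V) sequentially"
          by (rule lower_open[OF mz rs r S V(1) hk closed_closure V(2) d])
      qed
      define fp where "fp x = max (f x) 0" for x
      define fm where "fm x = max (- f x) 0" for x
      have fpc: "continuous_on UNIV fp" unfolding fp_def by (intro continuous_intros fc)
      have fmc: "continuous_on UNIV fm" unfolding fm_def by (intro continuous_intros fc)
      have fpk: "compact (closure {x. fp x \<noteq> 0})" by (rule cc_sub[OF fk]) (auto simp: fp_def)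
      have fmk: "compact (closure {x. fm x \<noteq> 0})" by (rule cc_sub[OF fk]) (auto simp: fm_def)
      have lp: "(\<lambda>n. tv (\<mu>s n) fp) \<longlonglongrightarrow> tv \<mu> fp" by (rule nonneg_case[OF fpc fpk]) (simp add: fp_def)
      have lm: "(\<lambda>n. tv (\<mu>s n) fm) \<longlonglongrightarrow> tv \<mu> fm" by (rule nonneg_case[OF fmc fmk]) (simp add: fm_def)
      obtain Bp where Bp: "\<And>x. \<bar>fp x\<bar> \<le> Bp" using cc_bounded[OF fpc fpk] by blast
      obtain Bm where Bm: "\<And>x. \<bar>fm x\<bar> \<le> Bm" using cc_bounded[OF fmc fmk] by blast
      have fpm: "fp \<in> borel_measurable borel" by (rule borel_measurable_continuous_onI[OF fpc])
      have fmm: "fm \<in> borel_measurable borel" by (rule borel_measurable_continuous_onI[OF fmc])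
      have feq: "f = (\<lambda>x. fp x - fm x)" unfolding fp_def fm_def by (rule ext) simp
      have "tv \<nu> f = tv \<nu> fp - tv \<nu> fm" if "signed_borel_measure \<nu>" for \<nu>
        by (subst feq) (rule tv_diff[OF that fpm Bp fmm Bm])
      thus ?thesis using tendsto_diff[OF lp lm] ss s by simp
    qed
    have P: "(\<lambda>n. integral\<^sup>L (pos_measure (\<mu>s n)) f) \<longlonglongrightarrow> integral\<^sup>L (pos_measure \<mu>) f" if f: "Cc f" for f
    proof -
      have "(\<lambda>n. (tv (\<mu>s n) f + signed_integral (\<mu>s n) f) / 2) \<longlonglongrightarrow> (tv \<mu> f + signed_integral \<mu> f) / 2"
        using T[OF f] S f unfolding Cc_def by (intro tendsto_divide tendsto_add tendsto_const) auto
      thus ?thesis unfolding tv_def signed_integral_def by simp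
    qed
    have N: "(\<lambda>n. integral\<^sup>L (neg_measure (\<mu>s n)) f) \<longlonglongrightarrow> integral\<^sup>L (neg_measure \<mu>) f" if f: "Cc f" for f
    proof -
      have "(\<lambda>n. (tv (\<mu>s n) f - signed_integral (\<mu>s n) f) / 2) \<longlonglongrightarrow> (tv \<mu> f - signed_integral \<mu> f) / 2"
        using T[OF f] S f unfolding Cc_def by (intro tendsto_divide tendsto_diff tendsto_const) auto
      thus ?thesis unfolding tv_def signed_integral_def by simp
    qed
    show "vague_conv (\<lambda>n. pos_part (\<mu>s n)) (pos_part \<mu>) \<and> vague_conv (\<lambda>n. neg_part (\<mu>s n)) (neg_part \<mu>)"
      using P N vp vn by blast
  qed
qed

end
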